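(* Let $d_*\ge1$ and $\Delta\in\mathbb N$, $\Delta\ge1$. Let $\approx_\Delta$ be the equivalence relation on $\mathbb Z^{d_*}$ generated by the relation: $a\sim b$ iff $|a|=|b|$ and $[a-b]\le\Delta$, and let $$d_\Delta=\sup\{[a-b]:\ a,b\in\mathbb Z^{d_*},\ a\approx_\Delta b\}.$$ Then $$d_\Delta\le C\,\Delta^{\frac{(d_*+1)!}{2}},$$ where $C$ depends only on $d_*$.
   Context: For $a\in\mathbb Z^{d_*}$, $|a|$ denotes the Euclidean norm, and $[a-b]=\min(|a-b|,|a+b|)$ for $a,b\in\mathbb Z^{d_*}$. "Generated by" means the smallest equivalence relation containing $\sim$ (i.e. $a\approx_\Delta b$ iff there is a finite chain $a=c_0\sim c_1\sim\dots\sim c_k=b$). *)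

theory Defs
  imports "HOL-Analysis.Analysis"
begin

text \<open>Points of Z^d are vectors int^'n, d = CARD('n).\<close>

definition inorm :: "int ^ 'n \<Rightarrow> real" where
  "inorm a = sqrt (\<Sum>i\<in>UNIV. real_of_int ((a $ i)\<^sup>2))"

definition bdist :: "int ^ 'n \<Rightarrow> int ^ 'n \<Rightarrow> real" where
  "bdist a b = min (inorm (a - b)) (inorm (a + b))"

definition simrel :: "nat \<Rightarrow> int ^ 'n \<Rightarrow> int ^ 'n \<Rightarrow> bool" where
  "simrel \<Delta> a b \<longleftrightarrow> inorm a = inorm b \<and> bdist a b \<le> real \<Delta>"

definition approx_rel :: "nat \<Rightarrow> int ^ 'n \<Rightarrow> int ^ 'n \<Rightarrow> bool" where
  "approx_rel \<Delta> = equivclp (simrel \<Delta>)"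

definition dDelta :: "nat \<Rightarrow> ('n::finite) itself \<Rightarrow> ereal" where
  "dDelta \<Delta> _ = Sup {ereal (bdist a b) | a b :: int ^ ('n::finite). approx_rel \<Delta> a b}"

end

theory Submission
  imports Defs "HOL-Combinatorics.Permutations"
begin


lemma det_bound:
  fixes M :: "real^'n^'n"
  assumes "\<And>i j. \<bar>M$i$j\<bar> \<le> bnd i" 
  shows "\<bar>det M\<bar> \<le> fact CARD('n) * prod bnd UNIV"
proof -
  have b0: "\<And>i. 0 \<le> bnd i" using assms abs_ge_zero order_trans by blast
  have "\<bar>det M\<bar> \<le> (\<Sum>p\<in>{p. p permutes (UNIV::'n set)}. \<bar>of_int (sign p) * (\<Prod>i\<in>UNIV. M$i$p i)\<bar>)"
    unfolding det_def by (rule sum_abs)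
  also have "\<dots> \<le> (\<Sum>p\<in>{p. p permutes (UNIV::'n set)}. prod bnd UNIV)"
  proof (rule sum_mono)
    fix p assume "p \<in> {p. p permutes (UNIV::'n set)}"
    have "\<bar>of_int (sign p) * (\<Prod>i\<in>UNIV. M$i$p i)\<bar> = (\<Prod>i\<in>UNIV. \<bar>M$i$p i\<bar>)"
      by (simp add: abs_mult abs_prod sign_def)
    also have "\<dots> \<le> prod bnd UNIV"
      by (rule prod_mono) (simp add: assms)
    finally show "\<bar>of_int (sign p) * (\<Prod>i\<in>UNIV. M$i$p i)\<bar> \<le> prod bnd UNIV" .
  qed
  also have "\<dots> = fact CARD('n) * prod bnd UNIV"
    by (simp add: card_permutations)
  finally show ?thesis .
qed




definition ivec :: "real^'n \<Rightarrow> bool" where "ivec x \<longleftrightarrow> (\<forall>i. x$i \<in> \<int>)"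

lemma ivec_inner: "ivec x \<Longrightarrow> ivec y \<Longrightarrow> inner x y \<in> \<int>"
  unfolding ivec_def inner_vec_def by (auto intro!: Ints_sum Ints_mult)

lemma ivec_diff: "ivec x \<Longrightarrow> ivec y \<Longrightarrow> ivec (x - y)"
  unfolding ivec_def by (auto intro!: Ints_diff)

lemma key:
  fixes p x :: "real^'n" and B :: "(real^'n) set"
  assumes indep: "independent B" and Bp: "\<And>u. u\<in>B \<Longrightarrow> ivec u \<and> norm u \<le> L \<and> norm (p+u) = norm p"
    and L1: "L \<ge> 1" and xs: "x - p \<in> span B" and xn: "norm x = norm p"
  shows "norm (x - p) \<le> sqrt (2 * CARD('n) * fact CARD('n)) * L^(card B + 1)"
proof -
  define d where "d = CARD('n)"
  define F where "F = (fact d :: real)"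
  have finB: "finite B" and cardB: "card B \<le> d"
    using independent_bound_general[OF indep] dim_subset_UNIV_cart[of B] d_def by auto
  obtain S :: "'n set" where S: "card S = card B" "finite S"
    using obtain_subset_with_card_n[of "card B" "UNIV::'n set"] cardB d_def by auto
  obtain uf where bij: "bij_betw uf S B" using finite_same_card_bij[OF S(2) finB S(1)] by auto
  have ufB: "\<And>i. i \<in> S \<Longrightarrow> uf i \<in> B" by (rule bij_betw_apply[OF bij])
  have ufinj: "inj_on uf S" by (rule bij_betw_imp_inj_on[OF bij])
  have ufim: "uf ` S = B" by (rule bij_betw_imp_surj_on[OF bij])
  define A :: "real^'n^'n" where "A = (\<chi> i j. if i \<in> S \<and> j \<in> S then inner (uf i) (uf j) else if i = j then 1 else 0)"
  define b :: "real^'n" where "b = (\<chi> i. if i \<in> S then inner (uf i) (uf i) / 2 else 0)"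
  have Aij: "A$i$j = (if i \<in> S \<and> j \<in> S then inner (uf i) (uf j) else if i = j then 1 else 0)" for i j
    by (simp add: A_def)
  have bi: "b$i = (if i \<in> S then inner (uf i) (uf i) / 2 else 0)" for i
    by (simp add: b_def)
  have Arow: "(A *v v)$i = (\<Sum>j\<in>S. inner (uf i) (uf j) * v$j)" if "i \<in> S" for v i
  proof -
    have "(A *v v)$i = (\<Sum>j\<in>UNIV. A$i$j * v$j)" by (simp add: matrix_vector_mult_def)
    also have "\<dots> = (\<Sum>j\<in>UNIV. if j \<in> S then inner (uf i) (uf j) * v$j else 0)"
      by (rule sum.cong) (use that in \<open>auto simp: Aij\<close>)
    also have "\<dots> = (\<Sum>j\<in>S. inner (uf i) (uf j) * v$j)"
      by (simp add: sum.If_cases)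
    finally show ?thesis .
  qed
  have Arow2: "(A *v v)$i = v$i" if "i \<notin> S" for v i
  proof -
    have "(A *v v)$i = (\<Sum>j\<in>UNIV. A$i$j * v$j)" by (simp add: matrix_vector_mult_def)
    also have "\<dots> = (\<Sum>j\<in>UNIV. if j = i then v$j else 0)"
      by (rule sum.cong) (use that in \<open>auto simp: Aij\<close>)
    also have "\<dots> = v$i" by simp
    finally show ?thesis .
  qed
  have innsum: "inner (uf i) (\<Sum>j\<in>S. v$j *\<^sub>R uf j) = (\<Sum>j\<in>S. inner (uf i) (uf j) * v$j)" for i v
    by (simp add: inner_sum_right mult.commute)
  have detnz: "det A \<noteq> 0"
  proof -
    have inj: "inj ((*v) A)"
    proof (rule injI)
      fix v1 v2 assume eq: "A *v v1 = A *v v2"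
      define v where "v = v1 - v2"
      have Av: "A *v v = 0" using eq by (simp add: v_def matrix_vector_mult_diff_distrib)
      define w where "w = (\<Sum>j\<in>S. v$j *\<^sub>R uf j)"
      have wi: "inner (uf i) w = 0" if "i \<in> S" for i
        using Arow[OF that, of v] Av innsum[of i v] by (simp add: w_def)
      have "inner w w = (\<Sum>j\<in>S. v$j * inner (uf j) w)"
        by (simp add: w_def inner_sum_left inner_commute)
      also have "\<dots> = 0" using wi by simp
      finally have w0: "w = 0" by simp
      have vS: "v$j = 0" if "j \<in> S" for j
      proof -
        define c where "c = (\<lambda>u. v $ (the_inv_into S uf u))"
        have "(\<Sum>u\<in>B. c u *\<^sub>R u) = (\<Sum>j\<in>S. c (uf j) *\<^sub>R uf j)"
          using sum.reindex[OF ufinj, of "\<lambda>u. c u *\<^sub>R u"] ufim by simp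
        also have "\<dots> = w" unfolding w_def c_def
          by (rule sum.cong) (auto simp: the_inv_into_f_f[OF ufinj])
        finally have "(\<Sum>u\<in>B. c u *\<^sub>R u) = 0" using w0 by simp
        then have "c (uf j) = 0" using indep ufB[OF that] unfolding independent_explicit by auto
        then show ?thesis by (simp add: c_def the_inv_into_f_f[OF ufinj that])
      qed
      have "v$j = 0" for j
        using vS[of j] Arow2[of j v] Av by (cases "j \<in> S") auto
      then show "v1 = v2" unfolding v_def by (simp add: vec_eq_iff)
    qed
    have lin: "linear ((*v) A)" by (simp add: matrix_vector_mul_linear)
    show ?thesis using det_nz_iff_inj[OF lin] inj by (simp add: matrix_of_matrix_vector_mul)
  qed
  have uint: "inner (uf i) (uf j) \<in> \<int>" if "i \<in> S" "j \<in> S" for i j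
    using ivec_inner Bp ufB that by blast
  have detint: "det A \<in> \<int>"
    unfolding det_def
    by (intro Ints_sum Ints_mult Ints_prod) (auto simp: Aij uint)
  have det1: "\<bar>det A\<bar> \<ge> 1" using Ints_nonzero_abs_ge1[OF detint detnz] .
  define lam :: "real^'n" where "lam = (\<chi> k. det(\<chi> i j. if j=k then b$i else A$i$j) / det A)"
  have Alam: "A *v lam = b" using cramer[OF detnz] lam_def by simp
  have normu: "norm (uf i) \<le> L" if "i \<in> S" for i using Bp ufB that by blast
  have innb: "\<bar>inner (uf i) (uf j)\<bar> \<le> L^2" if "i \<in> S" "j \<in> S" for i j
  proof -
    have "\<bar>inner (uf i) (uf j)\<bar> \<le> norm (uf i) * norm (uf j)" by (rule Cauchy_Schwarz_ineq2)
    also have "\<dots> \<le> L * L" by (rule mult_mono) (use normu that L1 in auto)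
    finally show ?thesis by (simp add: power2_eq_square)
  qed
  have lamb: "\<bar>lam$k\<bar> \<le> F * L^(2 * card S)" for k
  proof -
    define bnd where "bnd = (\<lambda>i::'n. if i \<in> S then L^2 else 1)"
    have "\<bar>det(\<chi> i j. if j=k then b$i else A$i$j)\<bar> \<le> fact CARD('n) * prod bnd UNIV"
    proof (rule det_bound)
      fix i j
      show "\<bar>(\<chi> i j. if j=k then b$i else A$i$j)$i$j\<bar> \<le> bnd i"
      proof (cases "i \<in> S")
        case True
        have "\<bar>b$i\<bar> \<le> L^2" using innb[OF True True] by (simp add: bi True) (smt (verit) zero_le_power2)
        then show ?thesis using innb[OF True] True by (auto simp: bnd_def Aij)
      next
        case False then show ?thesis by (auto simp: bnd_def Aij bi)
      qed
    qed
    also have "prod bnd UNIV = L^(2 * card S)"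
    proof -
      have "prod bnd UNIV = (\<Prod>i\<in>UNIV. if i \<in> S then L^2 else 1)" by (simp add: bnd_def)
      also have "\<dots> = (L^2)^card (UNIV \<inter> S)" by (subst prod.If_cases) auto
      finally show ?thesis by (simp add: power_mult)
    qed
    finally have "\<bar>det(\<chi> i j. if j=k then b$i else A$i$j)\<bar> \<le> F * L^(2 * card S)"
      by (simp add: F_def d_def)
    moreover have "\<bar>lam$k\<bar> \<le> \<bar>det(\<chi> i j. if j=k then b$i else A$i$j)\<bar>"
      using det1 by (simp add: lam_def abs_divide divide_le_eq mult_le_cancel_left1)
    ultimately show ?thesis by linarith
  qed
  define w where "w = (\<Sum>j\<in>S. lam$j *\<^sub>R uf j)"
  have wu: "inner (uf i) w = inner (uf i) (uf i) / 2" if "i \<in> S" for i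
    using Arow[OF that, of lam] Alam innsum[of i lam] that by (simp add: w_def bi)
  have wspan: "w \<in> span B" unfolding w_def
    by (intro span_sum span_scale span_base ufB)
  have cS: "card S \<le> d" using S cardB by simp
  have L0: "0 \<le> F * L^(2 * card S)" using L1 by (simp add: F_def)
  have ww: "inner w w \<le> d * (F * L^(2 * card S) * (L^2/2))"
  proof -
    have "inner w w = (\<Sum>j\<in>S. lam$j * inner (uf j) w)"
      by (simp add: w_def inner_sum_left)
    also have "\<dots> \<le> (\<Sum>j\<in>S. F * L^(2 * card S) * (L^2/2))"
    proof (rule sum_mono)
      fix j assume j: "j \<in> S"
      have "lam$j * inner (uf j) w \<le> \<bar>lam$j\<bar> * \<bar>inner (uf j) w\<bar>"
        by (simp add: abs_mult[symmetric])
      also have "\<dots> \<le> F * L^(2 * card S) * (L^2/2)"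
      proof (rule mult_mono)
        show "\<bar>inner (uf j) w\<bar> \<le> L^2/2" using innb[OF j j] wu[OF j] inner_ge_zero[of "uf j"] by linarith
      qed (use lamb L0 in auto)
      finally show "lam$j * inner (uf j) w \<le> F * L^(2 * card S) * (L^2/2)" .
    qed
    also have "\<dots> = card S * (F * L^(2 * card S) * (L^2/2))" by simp
    also have "\<dots> \<le> d * (F * L^(2 * card S) * (L^2/2))"
      by (rule mult_right_mono) (use cS L0 in auto)
    finally show ?thesis .
  qed
  have pu: "inner p u = - inner u u / 2" if "u \<in> B" for u
  proof -
    have "norm (p + u) ^ 2 = norm p ^ 2" using Bp[OF that] by simp
    then have "inner (p+u) (p+u) = inner p p" by (simp add: power2_norm_eq_inner)
    then show ?thesis by (simp add: inner_add_left inner_add_right inner_commute)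
  qed
  define q where "q = p + w"
  have qB: "inner q u = 0" if uB: "u \<in> B" for u
  proof -
    obtain i where i: "i \<in> S" "u = uf i" using uB ufim by blast
    show ?thesis using pu[OF uB] wu[OF i(1)] i(2) by (simp add: q_def inner_add_right inner_commute)
  qed
  have qspan: "inner q z = 0" if "z \<in> span B" for z
    using orthogonal_to_span[OF that, of q] qB by (simp add: orthogonal_def)
  define y where "y = x - q"
  have yspan: "y \<in> span B" unfolding y_def q_def
    using span_diff[OF xs wspan] by (simp add: algebra_simps)
  have xx: "inner x x = inner q q + inner y y"
  proof -
    have "x = q + y" by (simp add: y_def)
    then show ?thesis using qspan[OF yspan]
      by (simp add: inner_add_left inner_add_right inner_commute)
  qed
  have pp: "inner p p = inner q q + inner w w"
  proof -
    have "p = q - w" by (simp add: q_def)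
    then show ?thesis using qspan[OF wspan]
      by (simp add: inner_diff_left inner_diff_right inner_commute)
  qed
  have "inner x x = inner p p" using xn by (metis power2_norm_eq_inner)
  then have yw: "norm y = norm w" using xx pp by (simp add: norm_eq_sqrt_inner)
  have "x - p = y + w" by (simp add: y_def q_def)
  then have "norm (x - p) \<le> 2 * norm w" using norm_triangle_ineq[of y w] yw by simp
  then have "norm (x - p)^2 \<le> (2 * norm w)^2" by (rule power_mono) simp
  also have "\<dots> = 4 * inner w w" by (simp add: power2_eq_square power2_norm_eq_inner[symmetric])
  also have "\<dots> \<le> 4 * (d * (F * L^(2 * card S) * (L^2/2)))" using ww by (simp add: algebra_simps)
  also have "\<dots> = (sqrt (2 * d * F) * L^(card B + 1))^2"
    using S(1) by (simp add: power_mult_distrib power_mult[symmetric] algebra_simps F_def power2_eq_square power_add mult_2_right[symmetric]) (simp add: power_mult power2_eq_square)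
  finally have "norm (x - p)^2 \<le> (sqrt (2 * d * F) * L^(card B + 1))^2" .
  then have "norm (x - p) \<le> sqrt (2 * d * F) * L^(card B + 1)"
    by (rule power2_le_imp_le) (use L1 in \<open>simp add: F_def\<close>)
  then show ?thesis by (simp add: d_def F_def)
qed



definition chain :: "real \<Rightarrow> (nat \<Rightarrow> real^'n) \<Rightarrow> nat \<Rightarrow> bool" where
  "chain D c k \<longleftrightarrow> (\<forall>i\<le>k. ivec (c i) \<and> norm (c i) = norm (c 0)) \<and> (\<forall>i<k. dist (c i) (c (Suc i)) \<le> D)"

definition WW :: "(nat \<Rightarrow> real^'n) \<Rightarrow> nat \<Rightarrow> (real^'n) set" where
  "WW c j = span ((\<lambda>i. c i - c 0) ` {..j})"

lemma chain_prefix: "chain D c k \<Longrightarrow> j \<le> k \<Longrightarrow> chain D c j"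
  unfolding chain_def by (meson order_trans less_le_trans)

lemma WW_mono: "j \<le> k \<Longrightarrow> WW c j \<subseteq> WW c k"
  unfolding WW_def by (intro span_mono image_mono) auto

lemma WW_mem: "i \<le> k \<Longrightarrow> c i - c 0 \<in> WW c k"
  unfolding WW_def by (intro span_base) auto

lemma two_points:
  fixes p x y :: "real^'n"
  assumes "dim V \<le> 1" "x - p \<in> span V" "y - p \<in> span V" "x \<noteq> p" "y \<noteq> p"
    "norm x = norm p" "norm y = norm p"
  shows "x = y"
proof -
  define v where "v = x - p"
  have v0: "v \<noteq> 0" using assms(4) by (simp add: v_def)
  have "span {v} = span (span V)"
    by (rule dim_eq_span) (use assms(1,2) v0 v_def in auto)
  then have "y - p \<in> span {v}" using assms(3) by (metis span_span)
  then obtain t where t: "y - p = t *\<^sub>R v" by (auto simp: span_singleton)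
  have t0: "t \<noteq> 0" using t assms(5) by auto
  have e1: "inner (p + v) (p + v) = inner p p" using assms(6) v_def
    by (metis add.commute diff_add_cancel power2_norm_eq_inner)
  have e2: "inner (p + t *\<^sub>R v) (p + t *\<^sub>R v) = inner p p" using assms(7) t
    by (metis add.commute diff_add_cancel power2_norm_eq_inner)
  have a: "2 * inner p v + inner v v = 0" using e1
    by (simp add: inner_add_left inner_add_right inner_commute)
  have b: "t * (2 * inner p v + t * inner v v) = 0" using e2
    by (simp add: inner_add_left inner_add_right inner_commute algebra_simps power2_eq_square)
  have c: "2 * inner p v + t * inner v v = 0" using b t0 by simp
  have "(t - 1) * inner v v = (2 * inner p v + t * inner v v) - (2 * inner p v + inner v v)"
    by (simp add: algebra_simps)
  also have "\<dots> = 0" using a c by simp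
  finally have "(t - 1) * inner v v = 0" .
  then have "t = 1" using v0 by simp
  then show ?thesis using t v_def by (simp add: algebra_simps)
qed

lemma claim1:
  assumes ch: "chain D c k" and dm: "dim (WW c k) \<le> 1" and D: "D \<ge> 0" and ik: "i \<le> k"
  shows "dist (c i) (c 0) \<le> D"
proof (cases "c i = c 0")
  case True then show ?thesis using D by simp
next
  case False
  define m where "m = (LEAST j. c j \<noteq> c 0)"
  have cm: "c m \<noteq> c 0" unfolding m_def by (rule LeastI[of _ i]) (use False in auto)
  have mi: "m \<le> i" unfolding m_def by (rule Least_le) (use False in auto)
  have m0: "m \<noteq> 0" using cm by (metis)
  have "m - 1 < (LEAST j. c j \<noteq> c 0)" using m0 m_def by simp
  then have "\<not> (c (m - 1) \<noteq> c 0)" by (rule not_less_Least)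
  then have cm1: "c (m - 1) = c 0" by simp
  have chk: "\<And>i. i \<le> k \<Longrightarrow> norm (c i) = norm (c 0)" using ch unfolding chain_def by blast
  have "c m = c i"
  proof (rule two_points[of "(\<lambda>i. c i - c 0) ` {..k}" _ "c 0"])
    show "dim ((\<lambda>i. c i - c 0) ` {..k}) \<le> 1" using dm by (simp add: WW_def dim_span)
    show "c m - c 0 \<in> span ((\<lambda>i. c i - c 0) ` {..k})" using WW_mem[of m k c] mi ik by (simp add: WW_def)
    show "c i - c 0 \<in> span ((\<lambda>i. c i - c 0) ` {..k})" using WW_mem[of i k c] ik by (simp add: WW_def)
    show "c m \<noteq> c 0" by (rule cm)
    show "c i \<noteq> c 0" by (rule False)
    show "norm (c m) = norm (c 0)" by (rule chk) (use mi ik in simp)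
    show "norm (c i) = norm (c 0)" by (rule chk) (use ik in simp)
  qed
  moreover have "m - 1 < k" using mi ik m0 by simp
  then have "dist (c (m-1)) (c (Suc (m-1))) \<le> D"
    using ch unfolding chain_def by blast
  ultimately show ?thesis using cm1 m0 by (simp add: dist_commute)
qed

lemma step:
  fixes c :: "nat \<Rightarrow> real^'n"
  assumes IH: "\<And>(c'::nat \<Rightarrow> real^'n) k'. chain D c' k' \<Longrightarrow> dim (WW c' k') \<le> r \<Longrightarrow> (\<forall>i\<le>k'. dist (c' i) (c' 0) \<le> G)"
    and G: "G \<ge> 0" and D: "D \<ge> 0" and GD: "G + D \<ge> 1"
    and ch: "chain D c k" and dm: "dim (WW c k) \<le> r + 1" and ik: "i \<le> k"
  shows "dist (c i) (c 0) \<le> max G (sqrt (2 * CARD('n) * fact CARD('n)) * (G + D)^(r + 2))"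
proof (cases "dim (WW c k) \<le> r")
  case True
  then have "dist (c i) (c 0) \<le> G" using IH[OF ch True] ik by blast
  then show ?thesis by (rule max.coboundedI1)
next
  case False
  then have dk: "dim (WW c k) = r + 1" using dm by simp
  define m where "m = (LEAST j. r < dim (WW c j))"
  have rm: "r < dim (WW c m)" unfolding m_def by (rule LeastI[of _ k]) (use False in auto)
  have mk: "m \<le> k" unfolding m_def by (rule Least_le) (use False in auto)
  have W0: "dim (WW c 0) = 0" by (simp add: WW_def dim_span)
  have m0: "m \<noteq> 0" using rm W0 by (metis not_less0)
  have "m - 1 < (LEAST j. r < dim (WW c j))" using m0 m_def by simp
  then have "\<not> (r < dim (WW c (m - 1)))" by (rule not_less_Least)
  then have dm1: "dim (WW c (m - 1)) \<le> r" by simp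
  have "m - 1 \<le> k" using mk by simp
  then have pre: "\<forall>j\<le>m-1. dist (c j) (c 0) \<le> G"
    using IH[OF chain_prefix[OF ch \<open>m - 1 \<le> k\<close>] dm1] by blast
  have distm: "dist (c j) (c 0) \<le> G + D" if "j \<le> m" for j
  proof (cases "j \<le> m - 1")
    case True
    then have "dist (c j) (c 0) \<le> G" using pre by blast
    then show ?thesis using D by linarith
  next
    case False
    then have jm: "j = Suc (m - 1)" using that m0 by auto
    have "m - 1 < k" using mk m0 by simp
    then have "dist (c (m-1)) (c (Suc (m-1))) \<le> D" using ch unfolding chain_def by blast
    moreover have "dist (c (m-1)) (c 0) \<le> G" using pre by blast
    moreover have "dist (c j) (c 0) \<le> dist (c j) (c (m-1)) + dist (c (m-1)) (c 0)"
      by (rule dist_triangle)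
    moreover have "dist (c j) (c (m-1)) = dist (c (m-1)) (c (Suc (m-1)))"
      using jm by (simp add: dist_commute)
    ultimately show ?thesis by linarith
  qed
  define V where "V = (\<lambda>j. c j - c 0) ` {..m}"
  obtain B where BV: "B \<subseteq> V" and indB: "independent B" and VB: "V \<subseteq> span B"
    using maximal_independent_subset[of V] by blast
  have spanBV: "span B = span V"
  proof (rule subset_antisym)
    show "span B \<subseteq> span V" using BV by (rule span_mono)
    show "span V \<subseteq> span B" using VB subspace_span by (rule span_minimal)
  qed
  have WmB: "WW c m = span B" using spanBV by (simp add: WW_def V_def)
  have cardB: "card B = dim (WW c m)" using dim_eq_card[OF spanBV indB] by (simp add: WW_def V_def dim_span)
  have dmk: "dim (WW c m) \<le> dim (WW c k)" using WW_mono[OF mk] by (rule dim_subset)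
  have cB: "card B = r + 1" using cardB dmk dk rm by simp
  have "span (WW c m) = span (WW c k)"
    by (rule dim_eq_span) (use WW_mono[OF mk] dmk dk rm in auto)
  then have WkB: "WW c k = span B" using WmB by (simp add: span_span WW_def)
  have "norm (c i - c 0) \<le> sqrt (2 * CARD('n) * fact CARD('n)) * (G + D)^(card B + 1)"
  proof (rule key[OF indB])
    fix u assume "u \<in> B"
    then obtain j where j: "j \<le> m" "u = c j - c 0" using BV V_def by auto
    have chk: "\<And>i. i \<le> k \<Longrightarrow> ivec (c i) \<and> norm (c i) = norm (c 0)" using ch unfolding chain_def by blast
    have jk: "j \<le> k" using j(1) mk by simp
    have "ivec (c j)" "ivec (c 0)" "norm (c j) = norm (c 0)" using chk[OF jk] chk[of 0] by auto
    then show "ivec u \<and> norm u \<le> G + D \<and> norm (c 0 + u) = norm (c 0)"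
      using distm[OF j(1)] j(2) by (simp add: ivec_diff dist_norm)
  next
    show "c i - c 0 \<in> span B" using WW_mem[OF ik, of c] WkB by simp
    show "norm (c i) = norm (c 0)" using ch ik unfolding chain_def by blast
  qed (use GD in auto)
  then have "dist (c i) (c 0) \<le> sqrt (2 * CARD('n) * fact CARD('n)) * (G + D)^(r + 2)"
    using cB by (simp add: dist_norm)
  then show ?thesis by (rule max.coboundedI2)
qed




lemma Kge1: "sqrt (2 * CARD('n::finite) * fact CARD('n)) \<ge> 1"
proof -
  have "CARD('n) \<ge> 1" by (simp add: Suc_le_eq)
  moreover have "fact CARD('n) \<ge> (1::nat)" by (simp add: Suc_le_eq)
  ultimately have "1 * 1 \<le> CARD('n) * (fact CARD('n) :: nat)"
    by (rule mult_le_mono)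
  then have "2 * CARD('n) * fact CARD('n) \<ge> (1::nat)" by linarith
  then have "real (1::nat) \<le> real (2 * CARD('n) * fact CARD('n))"
    by (rule of_nat_mono)
  then have "(1::real) \<le> 2 * real CARD('n) * fact CARD('n)" by simp
  then show ?thesis by simp
qed

lemma fact_half:
  assumes "r \<ge> (1::nat)"
  shows "fact (r+1) div 2 \<ge> (1::nat)" "fact (Suc r + 1) div 2 = (fact (r+1) div 2) * (r + 2)"
proof -
  have "(2::nat) dvd fact (r+1)" by (rule dvd_fact) (use assms in auto)
  then obtain q :: nat where q: "fact (r+1) = 2 * q" by (rule dvdE)
  have "q \<noteq> 0" using q by (metis fact_nonzero mult_0_right)
  then show "fact (r+1) div 2 \<ge> (1::nat)" using q by simp
  have "fact (Suc r + 1) = (r + 2) * (fact (r + 1) :: nat)" by (simp add: algebra_simps)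
  then show "fact (Suc r + 1) div 2 = (fact (r+1) div 2) * (r + 2)" using q by simp
qed

lemma main:
  assumes "r \<ge> 1"
  shows "\<exists>C\<ge>1. \<forall>D\<ge>1. \<forall>(c::nat \<Rightarrow> real^'n) k. chain D c k \<longrightarrow> dim (WW c k) \<le> r \<longrightarrow>
            (\<forall>i\<le>k. dist (c i) (c 0) \<le> C * D^(fact (r+1) div 2))"
  using assms
proof (induction r rule: nat_induct_at_least)
  case base
  show ?case
  proof (intro exI[of _ 1] conjI allI impI)
    fix D :: real and c :: "nat \<Rightarrow> real^'n" and k i
    assume "1 \<le> D" "chain D c k" "dim (WW c k) \<le> 1" "i \<le> k"
    then have "dist (c i) (c 0) \<le> D" by (intro claim1) auto
    then show "dist (c i) (c 0) \<le> 1 * D ^ (fact (1 + 1) div 2)" by simp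
  qed simp
next
  case (Suc r)
  then obtain C where C1: "C \<ge> 1" and HC: "\<forall>D\<ge>1. \<forall>(c::nat \<Rightarrow> real^'n) k. chain D c k \<longrightarrow> dim (WW c k) \<le> r \<longrightarrow>
            (\<forall>i\<le>k. dist (c i) (c 0) \<le> C * D^(fact (r+1) div 2))" by blast
  define K where "K = sqrt (2 * CARD('n) * fact CARD('n))"
  have K1: "K \<ge> 1" using Kge1 K_def by simp
  define e :: nat where "e = fact (r+1) div 2"
  have e1: "e \<ge> 1" using fact_half(1)[OF Suc(1)] by (simp add: e_def)
  have ee: "fact (Suc r + 1) div 2 = e * (r + 2)" using fact_half(2)[OF Suc(1)] by (simp add: e_def)
  show ?case
  proof (intro exI[of _ "K * (2 * C)^(r+2)"] conjI allI impI)
    have p1: "1 \<le> (2 * C)^(r+2)" using C1 by (intro one_le_power) simp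
    have "1 * 1 \<le> K * (2 * C)^(r+2)"
      by (rule mult_mono[OF K1 p1]) (use K1 in linarith, simp)
    then show "1 \<le> K * (2 * C)^(r+2)" by simp
  next
    fix D :: real and c :: "nat \<Rightarrow> real^'n" and k i
    assume D1: "1 \<le> D" and ch: "chain D c k" and dm: "dim (WW c k) \<le> Suc r" and ik: "i \<le> k"
    define G where "G = C * D^e"
    have De: "D \<le> D^e" using power_increasing[OF e1 D1] by simp
    have DG: "D \<le> G"
    proof -
      have "D^e \<le> C * D^e" using C1 D1 by simp
      then show ?thesis using De by (simp add: G_def)
    qed
    have IH: "\<And>(c'::nat \<Rightarrow> real^'n) k'. chain D c' k' \<Longrightarrow> dim (WW c' k') \<le> r \<Longrightarrow> (\<forall>i\<le>k'. dist (c' i) (c' 0) \<le> G)"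
      using HC D1 unfolding G_def e_def by blast
    have d: "dist (c i) (c 0) \<le> max G (K * (G + D)^(r + 2))"
      unfolding K_def
    proof (rule step[OF IH _ _ _ ch _ ik])
      show "0 \<le> G" using DG D1 by linarith
      show "0 \<le> D" using D1 by linarith
      show "1 \<le> G + D" using DG D1 by linarith
      show "dim (WW c k) \<le> r + 1" using dm by simp
    qed
    have "G \<le> K * (G + D)^(r + 2)"
    proof -
      have "G \<le> G + D" using D1 by simp
      also have "\<dots> \<le> (G + D)^(r+2)" using D1 DG by (intro self_le_power) auto
      also have "\<dots> \<le> K * (G + D)^(r+2)" using K1 D1 DG by simp
      finally show ?thesis .
    qed
    then have "dist (c i) (c 0) \<le> K * (G + D)^(r + 2)" using d by simp
    also have "\<dots> \<le> K * (2 * G)^(r + 2)"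
    proof (rule mult_left_mono)
      show "(G + D)^(r+2) \<le> (2 * G)^(r+2)"
        by (rule power_mono) (use D1 DG in linarith)+
      show "0 \<le> K" using K1 by linarith
    qed
    also have "\<dots> = K * (2 * C)^(r+2) * D^(fact (Suc r + 1) div 2)"
    proof -
      have "(2*G)^(r+2) = (2*C)^(r+2) * (D^e)^(r+2)" by (simp add: G_def power_mult_distrib)
      moreover have "(D^e)^(r+2) = D^(fact (Suc r + 1) div 2)" by (simp only: ee power_mult)
      ultimately show ?thesis by simp
    qed
    finally show "dist (c i) (c 0) \<le> K * (2 * C)^(r+2) * D^(fact (Suc r + 1) div 2)" .
  qed
qed




definition rv :: "int^'n \<Rightarrow> real^'n" where "rv a = (\<chi> i. real_of_int (a$i))"

lemma rv_diff: "rv (a - b) = rv a - rv b" by (simp add: rv_def vec_eq_iff)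
lemma rv_add: "rv (a + b) = rv a + rv b" by (simp add: rv_def vec_eq_iff)
lemma ivec_rv: "ivec (rv a)" by (simp add: rv_def ivec_def)
lemma ivec_uminus: "ivec x \<Longrightarrow> ivec (- x)" by (auto simp: ivec_def)

lemma inorm_rv: "inorm a = norm (rv a)"
  unfolding inorm_def norm_vec_def L2_set_def rv_def by simp

lemma bdist_rv: "bdist a b = min (norm (rv a - rv b)) (norm (rv a + rv b))"
  unfolding bdist_def inorm_rv rv_diff rv_add ..

lemma approx_chain:
  assumes "approx_rel \<Delta> a b"
  shows "\<exists>c k. chain (real \<Delta>) c k \<and> c 0 = rv a \<and> (c k = rv b \<or> c k = - rv b)"
  using assms unfolding approx_rel_def
proof (induction rule: equivclp_induct)
  case base
  show ?case
    by (rule exI[of _ "\<lambda>_. rv a"], rule exI[of _ 0]) (simp add: chain_def ivec_rv)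
next
  case (step y z)
  obtain c k where ch: "chain (real \<Delta>) c k" and c0: "c 0 = rv a" and ck: "c k = rv y \<or> c k = - rv y"
    using step.IH by blast
  have sim: "norm (rv y) = norm (rv z) \<and> (norm (rv y - rv z) \<le> real \<Delta> \<or> norm (rv y + rv z) \<le> real \<Delta>)"
  proof (cases "simrel \<Delta> y z")
    case True then show ?thesis by (auto simp: simrel_def inorm_rv bdist_rv min_le_iff_disj)
  next
    case False
    then have "simrel \<Delta> z y" using step.hyps(2) by blast
    then show ?thesis
      by (auto simp: simrel_def inorm_rv bdist_rv min_le_iff_disj norm_minus_commute add.commute)
  qed
  have "\<exists>z'. (z' = rv z \<or> z' = - rv z) \<and> dist (c k) z' \<le> real \<Delta>"
  proof -
    have n1: "norm (- rv y - - rv z) = norm (rv y - rv z)" by (metis minus_diff_eq norm_minus_cancel diff_minus_eq_add add.commute uminus_add_conv_diff)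
    have n2: "norm (- rv y - rv z) = norm (rv y + rv z)" by (metis minus_add_distrib norm_minus_cancel diff_conv_add_uminus)
    show ?thesis
    proof (cases "c k = rv y")
      case True
      show ?thesis
      proof (cases "norm (rv y - rv z) \<le> real \<Delta>")
        case True then show ?thesis using \<open>c k = rv y\<close> by (intro exI[of _ "rv z"]) (simp add: dist_norm)
      next
        case False then have "norm (rv y + rv z) \<le> real \<Delta>" using sim by simp
        then show ?thesis using \<open>c k = rv y\<close> by (intro exI[of _ "- rv z"]) (simp add: dist_norm)
      qed
    next
      case False then have cky: "c k = - rv y" using ck by simp
      show ?thesis
      proof (cases "norm (rv y - rv z) \<le> real \<Delta>")
        case True then show ?thesis using cky n1 by (intro exI[of _ "- rv z"]) (simp add: dist_norm)
      next
        case False then have "norm (rv y + rv z) \<le> real \<Delta>" using sim by simp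
        then show ?thesis using cky n2 by (intro exI[of _ "rv z"]) (simp add: dist_norm)
      qed
    qed
  qed
  then obtain z' where z': "z' = rv z \<or> z' = - rv z" and dz: "dist (c k) z' \<le> real \<Delta>" by blast
  define c' where "c' = c(Suc k := z')"
  have c'0: "c' 0 = rv a" using c0 by (simp add: c'_def)
  have nz: "norm z' = norm (c 0)"
  proof -
    have "norm z' = norm (rv z)" using z' by auto
    also have "\<dots> = norm (rv y)" using sim by simp
    also have "\<dots> = norm (c k)" using ck by auto
    also have "\<dots> = norm (c 0)" using ch unfolding chain_def by blast
    finally show ?thesis .
  qed
  have iz: "ivec z'" using z' ivec_rv ivec_uminus by blast
  have "chain (real \<Delta>) c' (Suc k)"
    unfolding chain_def
  proof (intro conjI allI impI)
    fix i assume i: "i \<le> Suc k"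
    show "ivec (c' i)"
    proof (cases "i = Suc k")
      case True then show ?thesis using iz by (simp add: c'_def)
    next
      case False then have "i \<le> k" using i by simp
      then show ?thesis using ch False unfolding chain_def c'_def by simp
    qed
    show "norm (c' i) = norm (c' 0)"
    proof (cases "i = Suc k")
      case True then show ?thesis using nz by (simp add: c'_def)
    next
      case False then have ik: "i \<le> k" using i by simp
      have "norm (c i) = norm (c 0)" using ch ik unfolding chain_def by blast
      then show ?thesis using False by (simp add: c'_def)
    qed
  next
    fix i assume i: "i < Suc k"
    show "dist (c' i) (c' (Suc i)) \<le> real \<Delta>"
    proof (cases "i = k")
      case True then show ?thesis using dz by (simp add: c'_def)
    next
      case False then have ik: "i < k" using i by simp
      have "dist (c i) (c (Suc i)) \<le> real \<Delta>" using ch ik unfolding chain_def by blast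
      then show ?thesis using ik by (simp add: c'_def)
    qed
  qed
  moreover have "c' (Suc k) = rv z \<or> c' (Suc k) = - rv z" using z' by (simp add: c'_def)
  ultimately show ?case using c'0 by blast
qed

theorem proposition3p1:
  shows "\<exists>C::real. \<forall>\<Delta>::nat. \<Delta> \<ge> 1 \<longrightarrow>
           dDelta \<Delta> TYPE('n::finite) \<le> ereal (C * real \<Delta> ^ (fact (CARD('n) + 1) div 2))"
proof -
  have "CARD('n) \<ge> 1" by (simp add: Suc_le_eq)
  from main[OF this] obtain C where C1: "C \<ge> 1" and HC:
    "\<forall>D\<ge>1. \<forall>(c::nat \<Rightarrow> real^'n) k. chain D c k \<longrightarrow> dim (WW c k) \<le> CARD('n) \<longrightarrow>
            (\<forall>i\<le>k. dist (c i) (c 0) \<le> C * D^(fact (CARD('n)+1) div 2))" by blast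
  show ?thesis
  proof (intro exI[of _ C] allI impI)
    fix \<Delta> :: nat assume D1: "\<Delta> \<ge> 1"
    have bd: "bdist a b \<le> C * real \<Delta> ^ (fact (CARD('n) + 1) div 2)" if ab: "approx_rel \<Delta> a b" for a b :: "int^'n"
    proof -
      obtain c k where ch: "chain (real \<Delta>) c k" and c0: "c 0 = rv a" and ck: "c k = rv b \<or> c k = - rv b"
        using approx_chain[OF ab] by blast
      have "dim (WW c k) \<le> CARD('n)" by (rule dim_subset_UNIV_cart)
      moreover have "real \<Delta> \<ge> 1" using D1 by simp
      ultimately have dk: "dist (c k) (c 0) \<le> C * real \<Delta> ^ (fact (CARD('n) + 1) div 2)"
        using HC ch by blast
      have "bdist a b \<le> dist (c k) (c 0)"
        using ck c0 by (auto simp: bdist_rv dist_norm norm_minus_commute min_le_iff_disj add.commute)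
      then show ?thesis using dk by linarith
    qed
    show "dDelta \<Delta> TYPE('n) \<le> ereal (C * real \<Delta> ^ (fact (CARD('n) + 1) div 2))"
      unfolding dDelta_def using bd by (auto intro!: Sup_least)
  qed
qed


end
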